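(* Let $\ell\ge1$, $n\ge2$, $N=n^\ell$, $T=\ell(n-1)$, and consider the EBS connection schedule of order $\ell$. For every physical edge $e$ of its virtual topology, the number of triples $(t,a,b)\in\mathbb Z\times(\mathbb Z/n)^\ell\times(\mathbb Z/n)^\ell$ such that the EBS semi-path from $(a,t)$ to $b$ traverses $e$ is exactly $T\,n^{\ell-1}$.
   Context: The virtual topology of a connection schedule $(\pi_t)_{t\in\mathbb Z}$ (periodic with period $T$) is the directed graph on (nodes)$\times\mathbb Z$ with virtual edges $(i,t)\to(i,t+1)$ and physical edges $(i,t)\to(\pi_t(i),t+1)$. EBS connection schedule of order $\ell$: nodes are $(\mathbb Z/n)^\ell$; $\mathbf e_p$ ($0\le p<\ell$) is the standard basis vector; period $T=\ell(n-1)$; for $0\le p<\ell$, $1\le s\le n-1$, $\pi_{(n-1)p+s-1}(\mathbf i)=\mathbf i+s\mathbf e_p$, and $\pi_t=\pi_{t\bmod T}$. The EBS semi-path from $(a,t)$ to $b$ is built greedily: at the current vertex $(x,t')$, stop if $x=b$; otherwise write $t'\bmod T=(n-1)p+s-1$ and, if $(b-x)_p=s$ in $\mathbb Z/n$, traverse the physical edge to $(x+s\mathbf e_p,t'+1)$, else the virtual edge to $(x,t'+1)$. *)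

theory Defs
  imports Main
begin

text \<open>Nodes of the EBS schedule of order l: elements of (Z/n)^l, represented as
  lists of length l with entries in {0..<n}. Times are integers.\<close>

definition ebs_nodes :: "nat \<Rightarrow> nat \<Rightarrow> nat list set" where
  "ebs_nodes n l = {x. length x = l \<and> (\<forall>c\<in>set x. c < n)}"

definition ebs_T :: "nat \<Rightarrow> nat \<Rightarrow> nat" where
  "ebs_T n l = l * (n - 1)"

text \<open>Write t mod T = (n-1) p + s - 1 with 0 <= p < l, 1 <= s <= n-1.\<close>

definition ebs_phase :: "nat \<Rightarrow> nat \<Rightarrow> int \<Rightarrow> nat" where
  "ebs_phase n l t = nat (t mod int (ebs_T n l))"

definition ebs_p :: "nat \<Rightarrow> nat \<Rightarrow> int \<Rightarrow> nat" where
  "ebs_p n l t = ebs_phase n l t div (n - 1)"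

definition ebs_s :: "nat \<Rightarrow> nat \<Rightarrow> int \<Rightarrow> nat" where
  "ebs_s n l t = ebs_phase n l t mod (n - 1) + 1"

definition ebs_pi :: "nat \<Rightarrow> nat \<Rightarrow> int \<Rightarrow> nat list \<Rightarrow> nat list" where
  "ebs_pi n l t x = x[ebs_p n l t := (x ! ebs_p n l t + ebs_s n l t) mod n]"

definition ebs_diff :: "nat \<Rightarrow> nat list \<Rightarrow> nat list \<Rightarrow> nat \<Rightarrow> nat" where
  "ebs_diff n b x p = (b ! p + n - x ! p) mod n"

definition ebs_takes_phys :: "nat \<Rightarrow> nat \<Rightarrow> nat list \<Rightarrow> nat list \<times> int \<Rightarrow> bool" where
  "ebs_takes_phys n l b v = (fst v \<noteq> b \<and> ebs_diff n b (fst v) (ebs_p n l (snd v)) = ebs_s n l (snd v))"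

text \<open>One greedy step of the semi-path towards b (the vertex is kept fixed once b is reached,
  i.e. the path has stopped).\<close>

definition ebs_step :: "nat \<Rightarrow> nat \<Rightarrow> nat list \<Rightarrow> nat list \<times> int \<Rightarrow> nat list \<times> int" where
  "ebs_step n l b v =
     (if fst v = b then v
      else if ebs_takes_phys n l b v then (ebs_pi n l (snd v) (fst v), snd v + 1)
      else (fst v, snd v + 1))"

definition ebs_traverses ::
  "nat \<Rightarrow> nat \<Rightarrow> int \<Rightarrow> nat list \<Rightarrow> nat list \<Rightarrow> (nat list \<times> int) \<times> (nat list \<times> int) \<Rightarrow> bool" where
  "ebs_traverses n l t a b e =
     (\<exists>k. let v = (ebs_step n l b ^^ k) (a, t) in
            ebs_takes_phys n l b v \<and> e = (v, (ebs_pi n l (snd v) (fst v), snd v + 1)))"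

definition ebs_physical_edge ::
  "nat \<Rightarrow> nat \<Rightarrow> (nat list \<times> int) \<times> (nat list \<times> int) \<Rightarrow> bool" where
  "ebs_physical_edge n l e = (\<exists>i t. i \<in> ebs_nodes n l \<and> e = ((i, t), (ebs_pi n l t i, t + 1)))"

end

theory Submission
  imports Defs
begin

lemma phase_lt:
  assumes "l \<ge> 1" "n \<ge> 2"
  shows "ebs_phase n l t < ebs_T n l"
proof -
  have T: "int (ebs_T n l) > 0" using assms by (simp add: ebs_T_def)
  have "t mod int (ebs_T n l) < int (ebs_T n l)" "t mod int (ebs_T n l) \<ge> 0"
    using T by auto
  then show ?thesis unfolding ebs_phase_def by linarith
qed

lemma p_lt:
  assumes "l \<ge> 1" "n \<ge> 2"
  shows "ebs_p n l t < l"
proof -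
  have "ebs_phase n l t < l * (n - 1)" using phase_lt[OF assms] by (simp add: ebs_T_def)
  moreover have "n - 1 > 0" using assms by simp
  ultimately show ?thesis unfolding ebs_p_def using div_less_iff_less_mult by blast
qed

lemma s_ge: "1 \<le> ebs_s n l t" by (simp add: ebs_s_def)

lemma s_lt:
  assumes "n \<ge> 2"
  shows "ebs_s n l t < n"
proof -
  have "ebs_phase n l t mod (n - 1) < n - 1" using assms by simp
  then show ?thesis unfolding ebs_s_def using assms by linarith
qed

lemma same_ps:
  assumes "l \<ge> 1" "n \<ge> 2" "ebs_p n l t = ebs_p n l t'" "ebs_s n l t = ebs_s n l t'"
  shows "t mod int (ebs_T n l) = t' mod int (ebs_T n l)"
proof -
  have "ebs_phase n l t mod (n - 1) = ebs_phase n l t' mod (n - 1)"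
    using assms(4) by (simp add: ebs_s_def)
  moreover have "ebs_phase n l t div (n - 1) = ebs_phase n l t' div (n - 1)"
    using assms(3) by (simp add: ebs_p_def)
  ultimately have "ebs_phase n l t = ebs_phase n l t'"
    by (metis div_mult_mod_eq)
  moreover have "int (ebs_T n l) > 0" using assms by (simp add: ebs_T_def)
  ultimately show ?thesis unfolding ebs_phase_def
    by (metis nat_eq_iff2 pos_mod_sign)
qed

lemma periodic:
  "ebs_p n l (t - int (ebs_T n l)) = ebs_p n l t \<and> ebs_s n l (t - int (ebs_T n l)) = ebs_s n l t"
  by (simp add: ebs_p_def ebs_s_def ebs_phase_def mod_diff_right_eq[symmetric])

definition fixd :: "nat \<Rightarrow> nat \<Rightarrow> int \<Rightarrow> nat \<Rightarrow> nat \<Rightarrow> nat \<Rightarrow> bool" where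
  "fixd n l t k q c = (\<exists>k'<k. ebs_p n l (t + int k') = q \<and> ebs_s n l (t + int k') = c)"

definition Xp :: "nat \<Rightarrow> nat \<Rightarrow> nat list \<Rightarrow> nat list \<Rightarrow> int \<Rightarrow> nat \<Rightarrow> nat list" where
  "Xp n l a b t k = map (\<lambda>q. if fixd n l t k q (ebs_diff n b a q) then b ! q else a ! q) [0..<l]"

lemma fixd_Suc: "fixd n l t (Suc k) q c \<longleftrightarrow> fixd n l t k q c \<or> (ebs_p n l (t + int k) = q \<and> ebs_s n l (t + int k) = c)"
  unfolding fixd_def using less_Suc_eq by auto

lemma nodes_nth: "x \<in> ebs_nodes n l \<Longrightarrow> q < l \<Longrightarrow> x ! q < n"
  unfolding ebs_nodes_def by auto

lemma add_diff_mod: "(a::nat) < n \<Longrightarrow> b < n \<Longrightarrow> (a + (b + n - a) mod n) mod n = b"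
proof -
  assume "a < n" "b < n"
  have "(a + (b + n - a) mod n) mod n = (a + (b + n - a)) mod n" by (rule mod_add_right_eq)
  also have "a + (b + n - a) = b + n" using \<open>a < n\<close> by simp
  finally show ?thesis using \<open>b < n\<close> by simp
qed


lemma sub_sub_mod: assumes "(x::nat) < n" "y < n" shows "(x + n - (x + n - y) mod n) mod n = y"
proof (cases "y \<le> x")
  case True
  define m where "m = x - y"
  have xy: "x + n - y = m + n" using True m_def by linarith
  have "m < n" using assms m_def by linarith
  have e1: "(x + n - y) mod n = m" unfolding xy using \<open>m < n\<close> by simp
  have e2: "x + n - m = y + n" using True assms m_def by linarith
  show ?thesis unfolding e1 e2 using assms by simp
next
  case False
  then have e1: "(x + n - y) mod n = x + n - y" using assms by (intro mod_less) linarith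
  have e2: "x + n - (x + n - y) = y" using False assms by linarith
  show ?thesis unfolding e1 e2 using assms by simp
qed


lemma add_sub_mod: assumes "(x::nat) < n" "y < n" shows "((x + y) mod n + n - x) mod n = y"
proof (cases "x + y < n")
  case True
  then have e1: "(x + y) mod n = x + y" by (intro mod_less)
  have e: "x + y + n - x = y + n" by linarith
  show ?thesis unfolding e1 e using assms by simp
next
  case False
  define m where "m = x + y - n"
  have xy: "x + y = m + n" using False m_def by linarith
  have "m < n" using assms m_def by linarith
  have e1: "(x + y) mod n = m" unfolding xy using \<open>m < n\<close> by simp
  have e: "m + n - x = y" using False m_def by linarith
  show ?thesis unfolding e1 e using assms by simp
qed

lemma nodes_card: "card (ebs_nodes n m) = n ^ m" "finite (ebs_nodes n m)"
proof -
  have e: "ebs_nodes n m = {xs. set xs \<subseteq> {..<n} \<and> length xs = m}"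
    unfolding ebs_nodes_def by auto
  show "card (ebs_nodes n m) = n ^ m" unfolding e using card_lists_length_eq[of "{..<n}"] by simp
  show "finite (ebs_nodes n m)" unfolding e using finite_lists_length_eq[of "{..<n}"] by simp
qed

lemma fixed_card:
  assumes "p < l" "c < n"
  shows "card {d \<in> ebs_nodes n l. d ! p = c} = n ^ (l - 1)"
proof -
  define f where "f x = take p x @ c # drop p x" for x :: "nat list"
  have inj: "inj_on f (ebs_nodes n (l - 1))"
  proof (rule inj_onI)
    fix x y assume x: "x \<in> ebs_nodes n (l - 1)" and y: "y \<in> ebs_nodes n (l - 1)" and "f x = f y"
    have lx: "length x = l - 1" "length y = l - 1" using x y by (auto simp: ebs_nodes_def)
    then have "take p (f x) = take p x" "take p (f y) = take p y"
      "drop (Suc p) (f x) = drop p x" "drop (Suc p) (f y) = drop p y"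
      using assms by (simp_all add: f_def)
    then show "x = y" using \<open>f x = f y\<close> by (metis append_take_drop_id)
  qed
  have img: "f ` ebs_nodes n (l - 1) = {d \<in> ebs_nodes n l. d ! p = c}"
  proof
    show "f ` ebs_nodes n (l - 1) \<subseteq> {d \<in> ebs_nodes n l. d ! p = c}"
    proof
      fix d assume "d \<in> f ` ebs_nodes n (l - 1)"
      then obtain x where x: "x \<in> ebs_nodes n (l - 1)" "d = f x" by blast
      have lx: "length x = l - 1" "\<forall>v\<in>set x. v < n" using x by (auto simp: ebs_nodes_def)
      have "length d = l" using lx assms x by (simp add: f_def)
      moreover have "\<forall>v\<in>set d. v < n" using lx assms x set_take_subset[of p x] set_drop_subset[of p x]
        by (auto simp: f_def)
      moreover have "d ! p = c" using x lx assms by (simp add: f_def nth_append)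
      ultimately show "d \<in> {d \<in> ebs_nodes n l. d ! p = c}" by (simp add: ebs_nodes_def)
    qed
  next
    show "{d \<in> ebs_nodes n l. d ! p = c} \<subseteq> f ` ebs_nodes n (l - 1)"
    proof
      fix d assume d: "d \<in> {d \<in> ebs_nodes n l. d ! p = c}"
      have ld: "length d = l" "\<forall>v\<in>set d. v < n" "d ! p = c" using d by (auto simp: ebs_nodes_def)
      define x where "x = take p d @ drop (Suc p) d"
      have xn: "x \<in> ebs_nodes n (l - 1)" using ld assms set_take_subset[of p d] set_drop_subset[of "Suc p" d]
        by (auto simp: x_def ebs_nodes_def)
      have "d = take p d @ d ! p # drop (Suc p) d" using ld assms id_take_nth_drop[of p d] by simp
      moreover have "f x = take p d @ c # drop (Suc p) d"
        using ld assms unfolding f_def x_def by simp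
      ultimately have "f x = d" using ld by simp
      moreover note \<open>x \<in> ebs_nodes n (l - 1)\<close>
      ultimately show "d \<in> f ` ebs_nodes n (l - 1)" by blast
    qed
  qed
  show ?thesis using card_image[OF inj] img nodes_card by simp
qed

lemma one_step:
  assumes l: "l \<ge> 1" and n: "n \<ge> 2" and a: "a \<in> ebs_nodes n l" and b: "b \<in> ebs_nodes n l"
    and ne: "Xp n l a b t k \<noteq> b"
  shows "ebs_step n l b (Xp n l a b t k, t + int k) = (Xp n l a b t (Suc k), t + int (Suc k))"
proof -
  define p where "p = ebs_p n l (t + int k)"
  define s where "s = ebs_s n l (t + int k)"
  have pl: "p < l" using p_lt[OF l n] p_def by simp
  have s1: "1 \<le> s" and sn: "s < n" using s_ge s_lt[OF n] s_def by auto
  have la: "length a = l" and lb: "length b = l" using a b by (auto simp: ebs_nodes_def)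
  let ?X = "Xp n l a b t k"
  let ?Y = "Xp n l a b t (Suc k)"
  have lX: "length ?X = l" "length ?Y = l" by (auto simp: Xp_def)
  have Xq: "\<And>q. q < l \<Longrightarrow> ?X ! q = (if fixd n l t k q (ebs_diff n b a q) then b ! q else a ! q)"
    by (simp add: Xp_def)
  have Yq: "\<And>q. q < l \<Longrightarrow> ?Y ! q = (if fixd n l t (Suc k) q (ebs_diff n b a q) then b ! q else a ! q)"
    by (simp add: Xp_def)
  have fS: "\<And>q c. fixd n l t (Suc k) q c \<longleftrightarrow> fixd n l t k q c \<or> (p = q \<and> s = c)"
    using fixd_Suc p_def s_def by simp
  have bn: "b ! p < n" "a ! p < n" using a b pl nodes_nth by auto
  show ?thesis
  proof (cases "ebs_takes_phys n l b (?X, t + int k)")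
    case True
    then have d: "ebs_diff n b ?X p = s" unfolding ebs_takes_phys_def p_def s_def by simp
    have nf: "\<not> fixd n l t k p (ebs_diff n b a p)"
    proof
      assume f: "fixd n l t k p (ebs_diff n b a p)"
      then have "?X ! p = b ! p" using Xq pl by simp
      then have "ebs_diff n b ?X p = 0" by (simp add: ebs_diff_def)
      then show False using d s1 by simp
    qed
    then have Xp': "?X ! p = a ! p" using Xq pl by simp
    then have dd: "ebs_diff n b a p = s" using d by (simp add: ebs_diff_def)
    have "ebs_pi n l (t + int k) ?X = ?Y"
    proof (rule nth_equalityI)
      show "length (ebs_pi n l (t + int k) ?X) = length ?Y" using lX by (simp add: ebs_pi_def)
      fix q assume "q < length (ebs_pi n l (t + int k) ?X)"
      then have q: "q < l" using lX by (simp add: ebs_pi_def)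
      show "ebs_pi n l (t + int k) ?X ! q = ?Y ! q"
      proof (cases "q = p")
        case True
        have "?Y ! q = b ! p" using Yq[OF q] True dd fS by auto
        moreover have "ebs_pi n l (t + int k) ?X ! q = (a ! p + s) mod n"
          using True pl lX Xp' by (simp add: ebs_pi_def p_def[symmetric] s_def[symmetric])
        moreover have "(a ! p + s) mod n = b ! p"
          using dd add_diff_mod[OF bn(2) bn(1)] by (simp add: ebs_diff_def)
        ultimately show ?thesis by simp
      next
        case False
        have "ebs_pi n l (t + int k) ?X ! q = ?X ! q"
          using False by (simp add: ebs_pi_def p_def[symmetric])
        then show ?thesis using Xq[OF q] Yq[OF q] fS False by auto
      qed
    qed
    then show ?thesis using True ne by (simp add: ebs_step_def)
  next
    case False
    have "?X = ?Y"
    proof (rule nth_equalityI)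
      show "length ?X = length ?Y" using lX by simp
      fix q assume "q < length ?X"
      then have q: "q < l" using lX by simp
      show "?X ! q = ?Y ! q"
      proof (cases "q = p \<and> s = ebs_diff n b a q \<and> \<not> fixd n l t k q (ebs_diff n b a q)")
        case True
        then have "?X ! p = a ! p" using Xq q by auto
        then have "ebs_diff n b ?X p = s" using True by (simp add: ebs_diff_def)
        then have "ebs_takes_phys n l b (?X, t + int k)"
          using ne unfolding ebs_takes_phys_def p_def s_def by simp
        then show ?thesis using False by simp
      next
        case False
        then show ?thesis using Xq[OF q] Yq[OF q] fS by auto
      qed
    qed
    then show ?thesis using False ne by (simp add: ebs_step_def)
  qed
qed

lemma Xp_0: "length a = l \<Longrightarrow> Xp n l a b t 0 = a"
  by (simp add: Xp_def fixd_def) (metis map_nth)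

lemma Xp_mono:
  assumes "length b = l" "Xp n l a b t k = b"
  shows "Xp n l a b t (Suc k) = b"
proof (rule nth_equalityI)
  show "length (Xp n l a b t (Suc k)) = length b" using assms by (simp add: Xp_def)
  fix q assume "q < length (Xp n l a b t (Suc k))"
  then have q: "q < l" by (simp add: Xp_def)
  have "Xp n l a b t k ! q = b ! q" using assms by simp
  then show "Xp n l a b t (Suc k) ! q = b ! q" using q fixd_Suc
    by (auto simp: Xp_def split: if_splits)
qed

lemma fstpath:
  assumes l: "l \<ge> 1" and n: "n \<ge> 2" and a: "a \<in> ebs_nodes n l" and b: "b \<in> ebs_nodes n l"
  shows "fst ((ebs_step n l b ^^ k) (a, t)) = Xp n l a b t k
      \<and> (Xp n l a b t k \<noteq> b \<longrightarrow> (ebs_step n l b ^^ k) (a, t) = (Xp n l a b t k, t + int k))"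
proof (induction k)
  case 0
  have "length a = l" using a by (simp add: ebs_nodes_def)
  then show ?case by (simp add: Xp_0)
next
  case (Suc k)
  have lb: "length b = l" using b by (simp add: ebs_nodes_def)
  show ?case
  proof (cases "Xp n l a b t k = b")
    case True
    then have Y: "Xp n l a b t (Suc k) = b" using Xp_mono lb by blast
    have "fst ((ebs_step n l b ^^ k) (a, t)) = b" using Suc True by simp
    then have "(ebs_step n l b ^^ Suc k) (a, t) = (ebs_step n l b ^^ k) (a, t)"
      by (simp add: ebs_step_def)
    then show ?thesis using Y \<open>fst ((ebs_step n l b ^^ k) (a, t)) = b\<close> by simp
  next
    case False
    then have "(ebs_step n l b ^^ k) (a, t) = (Xp n l a b t k, t + int k)" using Suc by simp
    then have "(ebs_step n l b ^^ Suc k) (a, t) = (Xp n l a b t (Suc k), t + int (Suc k))"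
      using one_step[OF l n a b False] by simp
    then show ?thesis by simp
  qed
qed




lemma traverses_iff:
  assumes l: "l \<ge> 1" and n: "n \<ge> 2" and a: "a \<in> ebs_nodes n l" and b: "b \<in> ebs_nodes n l"
    and e: "e = ((i, t0), (ebs_pi n l t0 i, t0 + 1))"
  shows "ebs_traverses n l t a b e \<longleftrightarrow>
    (\<exists>k. Xp n l a b t k = i \<and> t + int k = t0 \<and> ebs_diff n b i (ebs_p n l t0) = ebs_s n l t0)"
proof
  assume "ebs_traverses n l t a b e"
  then obtain k where tp: "ebs_takes_phys n l b ((ebs_step n l b ^^ k) (a, t))"
    and ee: "e = ((ebs_step n l b ^^ k) (a, t), (ebs_pi n l (snd ((ebs_step n l b ^^ k) (a, t))) (fst ((ebs_step n l b ^^ k) (a, t))), snd ((ebs_step n l b ^^ k) (a, t)) + 1))"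
    unfolding ebs_traverses_def Let_def by blast
  have f1: "fst e = (i, t0)" using e by simp
  have f2: "fst e = (ebs_step n l b ^^ k) (a, t)" using ee by simp
  have v: "(ebs_step n l b ^^ k) (a, t) = (i, t0)" using f1 f2 by simp
  have "fst ((ebs_step n l b ^^ k) (a, t)) \<noteq> b" using tp by (simp add: ebs_takes_phys_def)
  then have "Xp n l a b t k \<noteq> b" using fstpath[OF l n a b, of k t] by simp
  then have "(ebs_step n l b ^^ k) (a, t) = (Xp n l a b t k, t + int k)"
    using fstpath[OF l n a b, of k t] by simp
  then have "Xp n l a b t k = i" "t + int k = t0" using v by auto
  moreover have "ebs_diff n b i (ebs_p n l t0) = ebs_s n l t0"
    using tp v by (simp add: ebs_takes_phys_def)
  ultimately show "\<exists>k. Xp n l a b t k = i \<and> t + int k = t0 \<and> ebs_diff n b i (ebs_p n l t0) = ebs_s n l t0"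
    by blast
next
  assume "\<exists>k. Xp n l a b t k = i \<and> t + int k = t0 \<and> ebs_diff n b i (ebs_p n l t0) = ebs_s n l t0"
  then obtain k where k: "Xp n l a b t k = i" "t + int k = t0"
    and d: "ebs_diff n b i (ebs_p n l t0) = ebs_s n l t0" by blast
  have ib: "i \<noteq> b"
  proof
    assume "i = b"
    then have "ebs_diff n b i (ebs_p n l t0) = 0" by (simp add: ebs_diff_def)
    then show False using d s_ge[of n l t0] by simp
  qed
  then have v: "(ebs_step n l b ^^ k) (a, t) = (i, t0)"
    using fstpath[OF l n a b, of k t] k by simp
  have "ebs_takes_phys n l b (i, t0)" using ib d by (simp add: ebs_takes_phys_def)
  then show "ebs_traverses n l t a b e" unfolding ebs_traverses_def Let_def
    using v e by (intro exI[of _ k]) simp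
qed

theorem mainTheorem5:
  fixes n l :: nat and e :: "(nat list \<times> int) \<times> (nat list \<times> int)"
  assumes "l \<ge> 1" and "n \<ge> 2" and "ebs_physical_edge n l e"
  shows "card {(t, a, b). a \<in> ebs_nodes n l \<and> b \<in> ebs_nodes n l \<and> ebs_traverses n l t a b e}
         = ebs_T n l * n ^ (l - 1)"
proof -
  note l = assms(1) and n = assms(2)
  obtain i t0 where i: "i \<in> ebs_nodes n l" and e: "e = ((i, t0), (ebs_pi n l t0 i, t0 + 1))"
    using assms(3) unfolding ebs_physical_edge_def by blast
  define T where "T = ebs_T n l"
  define p0 where "p0 = ebs_p n l t0"
  define s0 where "s0 = ebs_s n l t0"
  have Tpos: "T > 0" using l n by (simp add: T_def ebs_T_def)
  have p0l: "p0 < l" using p_lt[OF l n] p0_def by simp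
  have s01: "1 \<le> s0" and s0n: "s0 < n" using s_ge s_lt[OF n] s0_def by auto
  have li: "length i = l" using i by (simp add: ebs_nodes_def)
  have ilt: "\<And>q. q < l \<Longrightarrow> i ! q < n" using i nodes_nth by blast
  define W where "W j q c = fixd n l (t0 - int j) j q c" for j q c
  have window: "\<not> W j p0 s0" if "j < T" for j
  proof
    assume "W j p0 s0"
    then obtain k' where k': "k' < j" "ebs_p n l (t0 - int j + int k') = p0"
      "ebs_s n l (t0 - int j + int k') = s0" unfolding W_def fixd_def by blast
    have "(t0 - int j + int k') mod int T = t0 mod int T"
      using same_ps[OF l n] k' p0_def s0_def T_def by metis
    then have "int T dvd (t0 - (t0 - int j + int k'))" by (metis mod_eq_dvd_iff)
    then have "int T dvd (int j - int k')" by simp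
    then have "int T \<le> int j - int k'" using k' by (intro zdvd_imp_le) auto
    then show False using that by linarith
  qed
  define Aof where "Aof j d = map (\<lambda>q. if W j q (d ! q) then (i ! q + n - d ! q) mod n else i ! q) [0..<l]"
    for j and d :: "nat list"
  define Bof where "Bof j d = map (\<lambda>q. if W j q (d ! q) then i ! q else (i ! q + d ! q) mod n) [0..<l]"
    for j and d :: "nat list"
  define g where "g jd = (t0 - int (fst jd), Aof (fst jd) (snd jd), Bof (fst jd) (snd jd))" for jd
  define Tg where "Tg = {j. j < T} \<times> {d \<in> ebs_nodes n l. d ! p0 = s0}"
  define S where "S = {(t, a, b). a \<in> ebs_nodes n l \<and> b \<in> ebs_nodes n l \<and> ebs_traverses n l t a b e}"
  have lAB: "length (Aof j d) = l" "length (Bof j d) = l" for j d by (simp_all add: Aof_def Bof_def)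
  have DD: "ebs_diff n (Bof j d) (Aof j d) q = d ! q" if "q < l" "d ! q < n" for j d q
  proof (cases "W j q (d ! q)")
    case True
    then show ?thesis using that ilt[OF that(1)] sub_sub_mod
      by (simp add: Aof_def Bof_def ebs_diff_def)
  next
    case False
    then show ?thesis using that ilt[OF that(1)] add_sub_mod
      by (simp add: Aof_def Bof_def ebs_diff_def)
  qed
  have ABnodes: "Aof j d \<in> ebs_nodes n l" "Bof j d \<in> ebs_nodes n l" for j d
    using lAB n ilt by (auto simp: ebs_nodes_def Aof_def Bof_def)
  have sub1: "g ` Tg \<subseteq> S"
  proof
    fix x assume "x \<in> g ` Tg"
    then obtain j d where jd: "j < T" "d \<in> ebs_nodes n l" "d ! p0 = s0" and x: "x = g (j, d)"
      unfolding Tg_def by auto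
    have dlt: "\<And>q. q < l \<Longrightarrow> d ! q < n" using jd(2) nodes_nth by blast
    have X: "Xp n l (Aof j d) (Bof j d) (t0 - int j) j = i"
    proof (rule nth_equalityI)
      show "length (Xp n l (Aof j d) (Bof j d) (t0 - int j) j) = length i" using li by (simp add: Xp_def)
      fix q assume "q < length (Xp n l (Aof j d) (Bof j d) (t0 - int j) j)"
      then have q: "q < l" by (simp add: Xp_def)
      show "Xp n l (Aof j d) (Bof j d) (t0 - int j) j ! q = i ! q"
        using q DD[OF q dlt[OF q]] by (simp add: Xp_def W_def[symmetric] Aof_def Bof_def)
    qed
    have Bp0: "Bof j d ! p0 = (i ! p0 + s0) mod n"
      using window[OF jd(1)] jd(3) p0l by (simp add: Bof_def)
    have "ebs_diff n (Bof j d) i p0 = s0"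
      unfolding ebs_diff_def Bp0 using add_sub_mod[OF ilt[OF p0l] s0n] .
    then have "ebs_traverses n l (t0 - int j) (Aof j d) (Bof j d) e"
      using traverses_iff[OF l n ABnodes e] X p0_def s0_def by auto
    then show "x \<in> S" using x ABnodes by (simp add: S_def g_def)
  qed
  have sub2: "S \<subseteq> g ` Tg"
  proof
    fix x assume "x \<in> S"
    then obtain t a b where x: "x = (t, a, b)" and a: "a \<in> ebs_nodes n l" and b: "b \<in> ebs_nodes n l"
      and tr: "ebs_traverses n l t a b e" unfolding S_def by auto
    obtain k where k: "Xp n l a b t k = i" "t + int k = t0" and dd: "ebs_diff n b i p0 = s0"
      using tr traverses_iff[OF l n a b e] p0_def s0_def by auto
    have la: "length a = l" and lb: "length b = l" using a b by (auto simp: ebs_nodes_def)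
    have alt: "\<And>q. q < l \<Longrightarrow> a ! q < n" and blt: "\<And>q. q < l \<Longrightarrow> b ! q < n"
      using a b nodes_nth by blast+
    have Xq: "\<And>q. q < l \<Longrightarrow> i ! q = (if fixd n l t k q (ebs_diff n b a q) then b ! q else a ! q)"
      using k(1) by (auto simp: Xp_def)
    have nf: "\<not> fixd n l t k p0 (ebs_diff n b a p0)"
    proof
      assume "fixd n l t k p0 (ebs_diff n b a p0)"
      then have "i ! p0 = b ! p0" using Xq[OF p0l] by simp
      then have "ebs_diff n b i p0 = 0" by (simp add: ebs_diff_def)
      then show False using dd s01 by simp
    qed
    then have "i ! p0 = a ! p0" using Xq[OF p0l] by simp
    then have dap: "ebs_diff n b a p0 = s0" using dd by (simp add: ebs_diff_def)
    have kT: "k < T"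
    proof (rule ccontr)
      assume "\<not> k < T"
      then have "k - T < k" "t + int (k - T) = t0 - int T" using Tpos k(2) by auto
      moreover have "ebs_p n l (t0 - int T) = p0" "ebs_s n l (t0 - int T) = s0"
        using periodic[of n l t0] p0_def s0_def T_def by auto
      ultimately have "fixd n l t k p0 (ebs_diff n b a p0)" unfolding fixd_def dap by metis
      then show False using nf by simp
    qed
    define d where "d = map (\<lambda>q. ebs_diff n b a q) [0..<l]"
    have dn: "d \<in> ebs_nodes n l" using n by (auto simp: d_def ebs_nodes_def ebs_diff_def)
    have dp: "d ! p0 = s0" using dap p0l by (simp add: d_def)
    have tt: "t0 - int k = t" using k(2) by simp
    have Wq: "W k q c = fixd n l t k q c" for q c using tt by (simp add: W_def)
    have "Aof k d = a"
    proof (rule nth_equalityI)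
      show "length (Aof k d) = length a" using la lAB by simp
      fix q assume "q < length (Aof k d)"
      then have q: "q < l" using lAB by simp
      show "Aof k d ! q = a ! q"
        using q Xq[OF q] Wq sub_sub_mod[OF blt[OF q] alt[OF q]]
        by (simp add: Aof_def d_def ebs_diff_def)
    qed
    moreover have "Bof k d = b"
    proof (rule nth_equalityI)
      show "length (Bof k d) = length b" using lb lAB by simp
      fix q assume "q < length (Bof k d)"
      then have q: "q < l" using lAB by simp
      show "Bof k d ! q = b ! q"
        using q Xq[OF q] Wq add_diff_mod[OF alt[OF q] blt[OF q]]
        by (simp add: Bof_def d_def ebs_diff_def)
    qed
    ultimately have "x = g (k, d)" using x tt by (simp add: g_def)
    moreover have "(k, d) \<in> Tg" using kT dn dp by (simp add: Tg_def)
    ultimately show "x \<in> g ` Tg" by blast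
  qed
  have inj: "inj_on g Tg"
  proof (rule inj_onI)
    fix x y assume x: "x \<in> Tg" and y: "y \<in> Tg" and gxy: "g x = g y"
    obtain j d where xj: "x = (j, d)" "d \<in> ebs_nodes n l" using x Tg_def by auto
    obtain j' d' where yj: "y = (j', d')" "d' \<in> ebs_nodes n l" using y Tg_def by auto
    have jj: "j = j'" using gxy xj yj by (simp add: g_def)
    have AA: "Aof j d = Aof j d'" "Bof j d = Bof j d'" using gxy xj yj jj by (simp_all add: g_def)
    have "d = d'"
    proof (rule nth_equalityI)
      show "length d = length d'" using xj yj by (simp add: ebs_nodes_def)
      fix q assume "q < length d"
      then have q: "q < l" using xj by (simp add: ebs_nodes_def)
      have "d ! q = ebs_diff n (Bof j d) (Aof j d) q" using DD[OF q] nodes_nth[OF xj(2) q] by simp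
      also have "... = ebs_diff n (Bof j d') (Aof j d') q" using AA by simp
      also have "... = d' ! q" using DD[OF q] nodes_nth[OF yj(2) q] by simp
      finally show "d ! q = d' ! q" .
    qed
    then show "x = y" using xj yj jj by simp
  qed
  have "S = g ` Tg" using sub1 sub2 by blast
  then have "card S = card Tg" using card_image[OF inj] by simp
  also have "... = T * n ^ (l - 1)"
    unfolding Tg_def card_cartesian_product using fixed_card[OF p0l s0n] by simp
  finally show ?thesis unfolding S_def T_def .
qed

end
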